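(* Suppose the description of $K$ contains a ball constraint $g_m(x)=R^2-\sum_{i=1}^n x_i^2$ for some real $R$. Then for every integer $d\ge d_{\min}$, $-\infty<\operatorname{val}P_d=\operatorname{val}D_d$ (with values in $\mathbb R\cup\{+\infty\}$).
   Context: Polynomial optimization problem: minimize $f(x)=\sum_\alpha f_\alpha x^\alpha$ over $x\in\mathbb R^n$ subject to $g_i(x)=\sum_\alpha g_{i,\alpha}x^\alpha\ge 0$, $i=1,\dots,m$, with real polynomials $f,g_i$; $K=\{x:g_i(x)\ge0,\ i=1,\dots,m\}$. Set $g_0:=1$, $d_i:=\lceil\deg(g_i)/2\rceil$, $d_{\min}:=\max_{i=0,\dots,m}d_i$ (assume $\deg f\le 2d$). For $y=(y_\alpha)_{|\alpha|\le 2d}$, the localizing matrix $M_{d-d_i}(g_iy):=\big(\sum_\gamma g_{i,\gamma}y_{\alpha+\beta+\gamma}\big)_{|\alpha|,|\beta|\le d-d_i}$ is written $\sum_{|\alpha|\le 2d}A_{i,\alpha}y_\alpha$ with real symmetric matrices $A_{i,\alpha}$. $P_d$: $\inf_y\sum_\alpha f_\alpha y_\alpha$ s.t. $y_0=1$, $M_{d-d_i}(g_iy)\succeq0$, $i=0,\dots,m$. $D_d$: $\sup_{z\in\mathbb R,Z_0,\dots,Z_m} z$ s.t. $f_0-z=\sum_{i=0}^m\langle A_{i,0},Z_i\rangle$, $f_\alpha=\sum_{i=0}^m\langle A_{i,\alpha},Z_i\rangle$ for $0<|\alpha|\le 2d$, $Z_i\succeq0$, where $\langle A,B\rangle=\operatorname{trace}(AB)$.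 $\operatorname{val}$ denotes the optimal value, with $\inf\emptyset=+\infty$, $\sup\emptyset=-\infty$. *)

theory Defs
  imports Complex_Main "HOL-Library.Extended_Real"
begin

text \<open>Multivariate real polynomials in the variables x_0,...,x_(n-1) are represented by
  their coefficient functions p :: (nat => nat) => real on multi-indices alpha :: nat => nat
  (alpha i = exponent of x_i), with finite support on multi-indices supported in {0..<n}.\<close>

type_synonym mindex = "nat \<Rightarrow> nat"
type_synonym rpoly = "mindex \<Rightarrow> real"

definition zero_idx :: mindex where "zero_idx = (\<lambda>_. 0)"

definition add_idx :: "mindex \<Rightarrow> mindex \<Rightarrow> mindex" where
  "add_idx a b = (\<lambda>j. a j + b j)"

definition mdeg :: "nat \<Rightarrow> mindex \<Rightarrow> nat" where
  "mdeg n a = (\<Sum>i<n. a i)"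

definition mons_upto :: "nat \<Rightarrow> nat \<Rightarrow> mindex set" where
  "mons_upto n k = {a. (\<forall>i\<ge>n. a i = 0) \<and> mdeg n a \<le> k}"

definition is_poly :: "nat \<Rightarrow> rpoly \<Rightarrow> bool" where
  "is_poly n p \<longleftrightarrow> finite {a. p a \<noteq> 0} \<and> (\<forall>a. p a \<noteq> 0 \<longrightarrow> (\<forall>i\<ge>n. a i = 0))"

definition pdeg :: "nat \<Rightarrow> rpoly \<Rightarrow> nat" where
  "pdeg n p = Max (insert 0 {mdeg n a | a. p a \<noteq> 0})"

definition one_poly :: rpoly where
  "one_poly = (\<lambda>a. if a = zero_idx then 1 else 0)"

text \<open>the ball polynomial R^2 - sum_i x_i^2\<close>
definition ball_poly :: "nat \<Rightarrow> real \<Rightarrow> rpoly" where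
  "ball_poly n R = (\<lambda>a. if a = zero_idx then R\<^sup>2
      else if (\<exists>i<n. a = (\<lambda>j. if j = i then 2 else 0)) then -1 else 0)"

definition gg :: "(nat \<Rightarrow> rpoly) \<Rightarrow> nat \<Rightarrow> rpoly" where
  "gg g i = (if i = 0 then one_poly else g i)"

definition dloc :: "nat \<Rightarrow> (nat \<Rightarrow> rpoly) \<Rightarrow> nat \<Rightarrow> nat" where
  "dloc n g i = (pdeg n (gg g i) + 1) div 2"

definition dmin :: "nat \<Rightarrow> (nat \<Rightarrow> rpoly) \<Rightarrow> nat \<Rightarrow> nat" where
  "dmin n g m = Max {dloc n g i | i. i \<le> m}"

definition psd :: "'a set \<Rightarrow> ('a \<Rightarrow> 'a \<Rightarrow> real) \<Rightarrow> bool" where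
  "psd I M \<longleftrightarrow> (\<forall>a\<in>I. \<forall>b\<in>I. M a b = M b a) \<and>
     (\<forall>v. 0 \<le> (\<Sum>a\<in>I. \<Sum>b\<in>I. v a * M a b * v b))"

definition locmat :: "rpoly \<Rightarrow> (mindex \<Rightarrow> real) \<Rightarrow> mindex \<Rightarrow> mindex \<Rightarrow> real" where
  "locmat p y = (\<lambda>a b. \<Sum>c\<in>{c. p c \<noteq> 0}. p c * y (add_idx (add_idx a b) c))"

text \<open>coefficient matrix A_alpha of y_alpha in the localizing matrix of p\<close>
definition Amat :: "rpoly \<Rightarrow> mindex \<Rightarrow> mindex \<Rightarrow> mindex \<Rightarrow> real" where
  "Amat p al = (\<lambda>a b. \<Sum>c\<in>{c. p c \<noteq> 0 \<and> add_idx (add_idx a b) c = al}. p c)"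

definition tr_inner :: "'a set \<Rightarrow> ('a \<Rightarrow> 'a \<Rightarrow> real) \<Rightarrow> ('a \<Rightarrow> 'a \<Rightarrow> real) \<Rightarrow> real" where
  "tr_inner I A Z = (\<Sum>a\<in>I. \<Sum>b\<in>I. A a b * Z b a)"

definition P_feas :: "nat \<Rightarrow> (nat \<Rightarrow> rpoly) \<Rightarrow> nat \<Rightarrow> nat \<Rightarrow> (mindex \<Rightarrow> real) \<Rightarrow> bool" where
  "P_feas n g m d y \<longleftrightarrow> y zero_idx = 1 \<and>
     (\<forall>i\<le>m. psd (mons_upto n (d - dloc n g i)) (locmat (gg g i) y))"

definition valP :: "nat \<Rightarrow> rpoly \<Rightarrow> (nat \<Rightarrow> rpoly) \<Rightarrow> nat \<Rightarrow> nat \<Rightarrow> ereal" where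
  "valP n f g m d = Inf {ereal (\<Sum>a\<in>{a. f a \<noteq> 0}. f a * y a) | y. P_feas n g m d y}"

definition D_feas :: "nat \<Rightarrow> rpoly \<Rightarrow> (nat \<Rightarrow> rpoly) \<Rightarrow> nat \<Rightarrow> nat \<Rightarrow> real
     \<Rightarrow> (nat \<Rightarrow> mindex \<Rightarrow> mindex \<Rightarrow> real) \<Rightarrow> bool" where
  "D_feas n f g m d z Z \<longleftrightarrow>
     (\<forall>i\<le>m. psd (mons_upto n (d - dloc n g i)) (Z i)) \<and>
     (\<forall>al\<in>mons_upto n (2 * d).
        f al - (if al = zero_idx then z else 0) =
        (\<Sum>i\<le>m. tr_inner (mons_upto n (d - dloc n g i)) (Amat (gg g i) al) (Z i)))"

definition valD :: "nat \<Rightarrow> rpoly \<Rightarrow> (nat \<Rightarrow> rpoly) \<Rightarrow> nat \<Rightarrow> nat \<Rightarrow> ereal" where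
  "valD n f g m d = Sup {ereal z | z. \<exists>Z. D_feas n f g m d z Z}"

end

theory Submission
  imports Defs
begin



lemma hb_sep:
  fixes I :: "'a set" and C :: "('a \<Rightarrow> real) set" and oo :: 'a
  assumes fin: "finite I" and oI: "oo \<in> I"
    and add: "\<And>h1 h2. h1 \<in> C \<Longrightarrow> h2 \<in> C \<Longrightarrow> (\<lambda>a. h1 a + h2 a) \<in> C"
    and scale: "\<And>h r. h \<in> C \<Longrightarrow> 0 \<le> r \<Longrightarrow> (\<lambda>a. r * h a) \<in> C"
    and corep: "\<And>b. b \<in> I \<Longrightarrow> \<exists>t. \<exists>h\<in>C. \<forall>a\<in>I. h a = t * (if a = oo then 1 else 0) + (if a = b then 1 else 0)"
    and corem: "\<And>b. b \<in> I \<Longrightarrow> \<exists>t. \<exists>h\<in>C. \<forall>a\<in>I. h a = t * (if a = oo then 1 else 0) - (if a = b then 1 else 0)"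
    and noneg: "\<And>h. h \<in> C \<Longrightarrow> \<not> (\<forall>a\<in>I. h a = - (if a = oo then 1 else 0))"
  shows "\<exists>y. y oo = 1 \<and> (\<forall>h\<in>C. 0 \<le> (\<Sum>a\<in>I. y a * h a))"
proof -
  have main: "\<exists>y. y oo = 1 \<and> (\<forall>h\<in>C. (\<forall>a\<in>I - insert oo J. h a = 0) \<longrightarrow> 0 \<le> (\<Sum>a\<in>insert oo J. y a * h a))"
    if "J \<subseteq> I - {oo}" for J
  proof -
    have "finite J" using that fin finite_subset by blast
    thus ?thesis using that
    proof (induction J rule: finite_induct)
      case empty
      show ?case
      proof (intro exI[of _ "\<lambda>_. 1::real"] conjI ballI impI)
        fix h assume hC: "h \<in> C" and hz: "\<forall>a\<in>I - insert oo {}. h a = 0"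
        show "0 \<le> (\<Sum>a\<in>insert oo {}. 1 * h a)"
        proof (rule ccontr)
          assume "\<not> ?thesis"
          hence neg: "h oo < 0" by simp
          have "0 \<le> -1 / h oo" using neg by (simp add: divide_simps)
          from scale[OF hC this] have "(\<lambda>a. (-1 / h oo) * h a) \<in> C" .
          moreover have "\<forall>a\<in>I. (-1 / h oo) * h a = - (if a = oo then 1 else 0)"
            using hz neg by auto
          ultimately show False using noneg by blast
        qed
      qed simp
    next
      case (insert b J)
      from insert.prems have bI: "b \<in> I" and bo: "b \<noteq> oo" and JI: "J \<subseteq> I - {oo}" by auto
      from insert.IH[OF JI] obtain y where yo: "y oo = 1"
        and IH: "\<And>h. h \<in> C \<Longrightarrow> (\<forall>a\<in>I - insert oo J. h a = 0) \<Longrightarrow> 0 \<le> (\<Sum>a\<in>insert oo J. y a * h a)"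
        by blast
      define K where "K = insert oo J"
      have finK: "finite K" using insert.hyps K_def by simp
      have bK: "b \<notin> K" using insert.hyps bo K_def by simp
      define S where "S h = (\<Sum>a\<in>K. y a * h a)" for h :: "'a \<Rightarrow> real"
      define sp where "sp h \<longleftrightarrow> h \<in> C \<and> (\<forall>a\<in>I - insert b K. h a = 0)" for h
      define A where "A = {- S h / h b | h. sp h \<and> h b > 0}"
      define B where "B = {S h / (- h b) | h. sp h \<and> h b < 0}"
      have AB: "x \<le> z" if "x \<in> A" "z \<in> B" for x z
      proof -
        from that obtain h h' where h: "sp h" "h b > 0" "x = - S h / h b"
          and h': "sp h'" "h' b < 0" "z = S h' / (- h' b)"
          unfolding A_def B_def by blast
        define h'' where "h'' = (\<lambda>a. (- h' b) * h a + h b * h' a)"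
        have "h'' \<in> C" unfolding h''_def
          using add[OF scale[of h "- h' b"] scale[of h' "h b"]] h h' sp_def by auto
        moreover have "\<forall>a\<in>I - insert oo J. h'' a = 0"
        proof
          fix a assume a: "a \<in> I - insert oo J"
          show "h'' a = 0"
          proof (cases "a = b")
            case True thus ?thesis unfolding h''_def by simp
          next
            case False thus ?thesis using a h h' unfolding sp_def h''_def K_def by auto
          qed
        qed
        ultimately have "0 \<le> S h''" using IH unfolding S_def K_def by blast
        moreover have "S h'' = (- h' b) * S h + h b * S h'"
          
        proof -
          have "S h'' = (\<Sum>a\<in>K. (- h' b) * (y a * h a) + h b * (y a * h' a))"
            unfolding S_def h''_def by (rule sum.cong) (simp_all add: algebra_simps)
          also have "\<dots> = (- h' b) * S h + h b * S h'"
            unfolding S_def by (simp only: sum.distrib sum_distrib_left)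
          finally show ?thesis .
        qed
        ultimately have "0 \<le> (- h' b) * S h + h b * S h'" by simp
        hence ineq: "h' b * S h \<le> h b * S h'" by simp
        have pos: "0 < h b * (- h' b)" using h h' by (simp add: mult_pos_neg)
        have e1: "x * h b = - S h" using h by (simp add: field_simps)
        have e2: "z * (- h' b) = S h'" using h' by (simp add: field_simps)
        have "x * (h b * (- h' b)) = (x * h b) * (- h' b)" by (simp only: mult.assoc)
        also have "\<dots> = h' b * S h" by (simp add: e1)
        finally have e3: "x * (h b * (- h' b)) = h' b * S h" .
        have "z * (h b * (- h' b)) = h b * (z * (- h' b))" by (simp only: mult_ac)
        also have "\<dots> = h b * S h'" by (simp only: e2)
        finally have e4: "z * (h b * (- h' b)) = h b * S h'" .
        have "x * (h b * (- h' b)) \<le> z * (h b * (- h' b))" using ineq e3 e4 by simp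
        thus ?thesis using pos by (simp add: mult_le_cancel_right)
      qed
      obtain t h1 where h1: "h1 \<in> C" "\<forall>a\<in>I. h1 a = t * (if a = oo then 1 else 0) + (if a = b then 1 else 0)"
        using corep[OF bI] by blast
      obtain t' h2 where h2: "h2 \<in> C" "\<forall>a\<in>I. h2 a = t' * (if a = oo then 1 else 0) - (if a = b then 1 else 0)"
        using corem[OF bI] by blast
      have sp1: "sp h1" using h1 bo unfolding sp_def K_def by auto
      have sp2: "sp h2" using h2 bo unfolding sp_def K_def by auto
      have h1b: "h1 b = 1" using h1 bI bo by simp
      have h2b: "h2 b = -1" using h2 bI bo by simp
      have Ane: "A \<noteq> {}" using sp1 h1b unfolding A_def by force
      have Bne: "B \<noteq> {}" using sp2 h2b unfolding B_def by force
      obtain z0 where z0: "z0 \<in> B" using Bne by blast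
      have Abdd: "bdd_above A" using AB z0 by (auto simp: bdd_above_def)
      define yb where "yb = Sup A"
      define y' where "y' = y(b := yb)"
      show ?case
      proof (intro exI[of _ y'] conjI ballI impI)
        show "y' oo = 1" using yo bo y'_def by simp
      next
        fix h assume hC: "h \<in> C" and hz: "\<forall>a\<in>I - insert oo (insert b J). h a = 0"
        have spH: "sp h" using hC hz unfolding sp_def K_def by auto
        have eq: "(\<Sum>a\<in>insert oo (insert b J). y' a * h a) = S h + yb * h b"
        proof -
          have "insert oo (insert b J) = insert b K" unfolding K_def by auto
          hence "(\<Sum>a\<in>insert oo (insert b J). y' a * h a) = y' b * h b + (\<Sum>a\<in>K. y' a * h a)"
            using finK bK by simp
          also have "(\<Sum>a\<in>K. y' a * h a) = S h" unfolding S_def y'_def using bK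
            by (intro sum.cong) auto
          finally show ?thesis using y'_def by simp
        qed
        have "0 \<le> S h + yb * h b"
        proof (cases "h b" "0::real" rule: linorder_cases)
          case less
          have "yb \<le> S h / (- h b)" unfolding yb_def
            apply (rule cSup_least[OF Ane])
            using AB spH less unfolding B_def by blast
          thus ?thesis using less by (simp add: divide_simps)
        next
          case equal
          have "\<forall>a\<in>I - insert oo J. h a = 0" using hz equal by auto
          hence "0 \<le> S h" using IH hC unfolding S_def K_def by blast
          thus ?thesis using equal by simp
        next
          case greater
          have "- S h / h b \<le> yb" unfolding yb_def
            apply (rule cSup_upper[OF _ Abdd])
            using spH greater unfolding A_def by blast
          thus ?thesis using greater by (simp add: divide_simps)
        qed
        thus "0 \<le> (\<Sum>a\<in>insert oo (insert b J). y' a * h a)" using eq by simp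
      qed
    qed
  qed
  from main[of "I - {oo}"] oI have "\<exists>y. y oo = 1 \<and> (\<forall>h\<in>C. 0 \<le> (\<Sum>a\<in>I. y a * h a))"
    by (simp add: insert_absorb)
  thus ?thesis .
qed




definition qf :: "'a set \<Rightarrow> ('a \<Rightarrow> 'a \<Rightarrow> real) \<Rightarrow> ('a \<Rightarrow> real) \<Rightarrow> real" where
  "qf J M v = (\<Sum>a\<in>J. \<Sum>b\<in>J. v a * M a b * v b)"

lemma psd_qf: "psd J M \<Longrightarrow> 0 \<le> qf J M v"
  unfolding psd_def qf_def by blast

lemma psd_sym: "psd J M \<Longrightarrow> a \<in> J \<Longrightarrow> b \<in> J \<Longrightarrow> M a b = M b a"
  unfolding psd_def by blast

lemma qf_restrict:
  assumes "finite S" "T \<subseteq> S" "\<forall>a\<in>S - T. v a = 0"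
  shows "qf S M v = qf T M v"
proof -
  have "qf S M v = (\<Sum>a\<in>T. \<Sum>b\<in>S. v a * M a b * v b)"
    unfolding qf_def using assms by (intro sum.mono_neutral_right) auto
  also have "\<dots> = qf T M v"
    unfolding qf_def using assms by (intro sum.cong refl sum.mono_neutral_right) auto
  finally show ?thesis .
qed

lemma qf_insert:
  assumes "finite J" "j \<notin> J"
  shows "qf (insert j J) M v = v j * M j j * v j + (\<Sum>b\<in>J. v j * M j b * v b)
      + (\<Sum>a\<in>J. v a * M a j * v j) + qf J M v"
  using assms unfolding qf_def by (simp add: sum.distrib)

lemma qf_cong: "(\<forall>a\<in>J. v a = v' a) \<Longrightarrow> qf J M v = qf J M v'"
  unfolding qf_def by (intro sum.cong refl) auto

lemma psd_diag_nonneg: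
  assumes "finite S" "psd S Z" "j \<in> S"
  shows "0 \<le> Z j j"
proof -
  have "qf S Z (\<lambda>a. if a = j then 1 else 0) = qf {j} Z (\<lambda>a. if a = j then 1 else 0)"
    using assms by (intro qf_restrict) auto
  also have "\<dots> = Z j j" unfolding qf_def by simp
  finally show ?thesis using psd_qf[OF assms(2)] by metis
qed

lemma psd_zero_diag:
  assumes "finite S" "psd S Z" "j \<in> S" "Z j j = 0" "b \<in> S"
  shows "Z j b = 0"
proof (cases "b = j")
  case True thus ?thesis using assms by simp
next
  case False
  have sym: "Z b j = Z j b" using psd_sym[OF assms(2)] assms by auto
  have key: "0 \<le> 2 * t * Z j b + Z b b" for t
  proof -
    define v where "v = (\<lambda>a. if a = j then t else if a = b then 1 else (0::real))"
    have "qf S Z v = qf {j, b} Z v"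
      using assms by (intro qf_restrict) (auto simp: v_def)
    also have "\<dots> = 2 * t * Z j b + Z b b"
      using False assms(4) sym unfolding qf_def v_def by (simp add: algebra_simps)
    finally show ?thesis using psd_qf[OF assms(2), of v] by simp
  qed
  show ?thesis
  proof (rule ccontr)
    assume ne: "Z j b \<noteq> 0"
    have "0 \<le> 2 * (- (Z b b + 1) / (2 * Z j b)) * Z j b + Z b b" by (rule key)
    also have "\<dots> = -1" using ne by (simp add: field_simps)
    finally show False by simp
  qed
qed

lemma psd_decomp:
  assumes "finite J"
  shows "psd J Z \<Longrightarrow> \<exists>(k::nat) V. \<forall>a\<in>J. \<forall>b\<in>J. Z a b = (\<Sum>i<k. V i a * V i b)"
  using assms
proof (induction J arbitrary: Z rule: finite_induct)
  case empty
  show ?case by simp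
next
  case (insert j J)
  let ?S = "insert j J"
  have finS: "finite ?S" using insert.hyps by simp
  have sym: "\<And>a b. a \<in> ?S \<Longrightarrow> b \<in> ?S \<Longrightarrow> Z a b = Z b a" using psd_sym[OF insert.prems] by blast
  have djj: "0 \<le> Z j j" using psd_diag_nonneg[OF finS insert.prems] by simp
  show ?case
  proof (cases "Z j j = 0")
    case True
    have zrow: "\<And>b. b \<in> ?S \<Longrightarrow> Z j b = 0" using psd_zero_diag[OF finS insert.prems _ True] by simp
    have "psd J Z"
      unfolding psd_def
    proof (intro conjI allI ballI)
      fix a b assume "a \<in> J" "b \<in> J" thus "Z a b = Z b a" using sym by auto
    next
      fix v
      have "qf ?S Z (v(j := 0)) = qf J Z (v(j := 0))"
        using finS by (intro qf_restrict) auto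
      also have "\<dots> = qf J Z v" using insert.hyps by (intro qf_cong) auto
      finally show "0 \<le> (\<Sum>a\<in>J. \<Sum>b\<in>J. v a * Z a b * v b)"
        using psd_qf[OF insert.prems, of "v(j := 0)"] unfolding qf_def by simp
    qed
    from insert.IH[OF this] obtain k :: nat and V where V: "\<forall>a\<in>J. \<forall>b\<in>J. Z a b = (\<Sum>i<k. V i a * V i b)" by blast
    define V' where "V' i = (V i)(j := 0)" for i
    show ?thesis
    proof (intro exI[of _ k] exI[of _ V'] ballI)
      fix a b assume a: "a \<in> ?S" and b: "b \<in> ?S"
      show "Z a b = (\<Sum>i<k. V' i a * V' i b)"
      proof (cases "a = j \<or> b = j")
        case True
        hence "Z a b = 0" using zrow sym a b by auto
        thus ?thesis using True unfolding V'_def by auto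
      next
        case False
        thus ?thesis using V a b unfolding V'_def by auto
      qed
    qed
  next
    case False
    hence pos: "0 < Z j j" using djj by simp
    define r where "r = sqrt (Z j j)"
    have r: "0 < r" "r * r = Z j j" using pos unfolding r_def by auto
    define w where "w a = Z j a / r" for a
    define Z' where "Z' a b = Z a b - w a * w b" for a b
    have "psd J Z'"
      unfolding psd_def
    proof (intro conjI allI ballI)
      fix a b assume "a \<in> J" "b \<in> J" thus "Z' a b = Z' b a" using sym unfolding Z'_def by auto
    next
      fix v
      define s where "s = (\<Sum>b\<in>J. Z j b * v b)"
      have q1: "qf J Z' v = qf J Z v - s * s / Z j j"
      proof -
        have "qf J Z' v = qf J Z v - (\<Sum>a\<in>J. \<Sum>b\<in>J. (v a * w a) * (w b * v b))"
          unfolding qf_def Z'_def by (simp add: algebra_simps sum_subtractf)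
        also have "(\<Sum>a\<in>J. \<Sum>b\<in>J. (v a * w a) * (w b * v b)) = (\<Sum>a\<in>J. v a * w a) * (\<Sum>b\<in>J. w b * v b)"
          by (simp add: sum_product)
        also have "(\<Sum>a\<in>J. v a * w a) = s / r" unfolding s_def w_def
          by (simp add: sum_divide_distrib algebra_simps)
        also have "(\<Sum>b\<in>J. w b * v b) = s / r" unfolding s_def w_def
          by (simp add: sum_divide_distrib algebra_simps)
        finally show ?thesis using r by (simp add: field_simps)
      qed
      define t where "t = - s / Z j j"
      have "qf ?S Z (v(j := t)) = t * Z j j * t + (\<Sum>b\<in>J. t * Z j b * (v(j := t)) b)
          + (\<Sum>a\<in>J. (v(j := t)) a * Z a j * t) + qf J Z (v(j := t))"
        by (simp only: qf_insert[OF insert.hyps] fun_upd_same)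
      also have "(\<Sum>b\<in>J. t * Z j b * (v(j := t)) b) = (\<Sum>b\<in>J. t * Z j b * v b)"
        using insert.hyps by (intro sum.cong) auto
      also have "(\<Sum>a\<in>J. (v(j := t)) a * Z a j * t) = (\<Sum>a\<in>J. v a * Z a j * t)"
        using insert.hyps by (intro sum.cong) auto
      also have "qf J Z (v(j := t)) = qf J Z v" using insert.hyps by (intro qf_cong) auto
      also have "(\<Sum>b\<in>J. t * Z j b * v b) = t * s" unfolding s_def by (simp add: sum_distrib_left algebra_simps)
      also have "(\<Sum>a\<in>J. v a * Z a j * t) = t * s" unfolding s_def
        using sym insert.hyps by (simp add: sum_distrib_left algebra_simps)
      finally have "qf ?S Z (v(j := t)) = t * Z j j * t + t * s + t * s + qf J Z v" .
      also have "\<dots> = qf J Z v - s * s / Z j j" unfolding t_def using pos by (simp add: field_simps)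
      finally have "0 \<le> qf J Z v - s * s / Z j j" using psd_qf[OF insert.prems] by metis
      thus "0 \<le> (\<Sum>a\<in>J. \<Sum>b\<in>J. v a * Z' a b * v b)" using q1 unfolding qf_def by simp
    qed
    from insert.IH[OF this] obtain k :: nat and V where V: "\<forall>a\<in>J. \<forall>b\<in>J. Z' a b = (\<Sum>i<k. V i a * V i b)" by blast
    define V' where "V' i = (if i < k then (V i)(j := 0) else w)" for i
    have wj: "w j * w b = Z j b" for b unfolding w_def using r pos by (simp add: field_simps)
    show ?thesis
    proof (intro exI[of _ "Suc k"] exI[of _ V'] ballI)
      fix a b assume a: "a \<in> ?S" and b: "b \<in> ?S"
      have split: "(\<Sum>i<Suc k. V' i a * V' i b) = (\<Sum>i<k. V' i a * V' i b) + w a * w b"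
        unfolding V'_def by simp
      show "Z a b = (\<Sum>i<Suc k. V' i a * V' i b)"
      proof (cases "a = j \<or> b = j")
        case True
        hence "(\<Sum>i<k. V' i a * V' i b) = 0" unfolding V'_def by auto
        moreover have "Z a b = w a * w b" using True wj sym a b by (auto simp: mult.commute)
        ultimately show ?thesis using split by simp
      next
        case False
        hence "(\<Sum>i<k. V' i a * V' i b) = Z' a b" using V a b unfolding V'_def by auto
        thus ?thesis using split unfolding Z'_def by simp
      qed
    qed
  qed
qed

lemma trace_psd_nonneg:
  assumes "finite J" "psd J L" "psd J Z"
  shows "0 \<le> tr_inner J L Z"
proof -
  obtain k :: nat and V where V: "\<forall>a\<in>J. \<forall>b\<in>J. Z a b = (\<Sum>i<k. V i a * V i b)"
    using psd_decomp[OF assms(1,3)] by blast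
  have "tr_inner J L Z = (\<Sum>a\<in>J. \<Sum>b\<in>J. L a b * (\<Sum>i<k. V i b * V i a))"
    unfolding tr_inner_def using V by (intro sum.cong refl) auto
  also have "\<dots> = (\<Sum>i<k. qf J L (V i))"
    unfolding qf_def by (simp add: sum_distrib_left algebra_simps sum.swap[of _ "{..<k}"])
  also have "\<dots> \<ge> 0" using psd_qf[OF assms(2)] by (simp add: sum_nonneg)
  finally show ?thesis .
qed




definition ee :: "nat \<Rightarrow> mindex" where "ee i = (\<lambda>k. if k = i then 1 else 0)"
definition twoe :: "nat \<Rightarrow> mindex" where "twoe i = (\<lambda>k. if k = i then 2 else 0)"
definition EE :: "mindex \<Rightarrow> mindex \<Rightarrow> real" where "EE a = (\<lambda>al. if al = a then 1 else 0)"

lemma add_idx_comm: "add_idx a b = add_idx b a"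
  unfolding add_idx_def by (simp add: add.commute)
lemma add_idx_assoc: "add_idx (add_idx a b) c = add_idx a (add_idx b c)"
  unfolding add_idx_def by (simp add: add.assoc)
lemma add_idx_zero[simp]: "add_idx a zero_idx = a" "add_idx zero_idx a = a"
  unfolding add_idx_def zero_idx_def by auto
lemma add_twoe: "add_idx (add_idx c (ee j)) (add_idx c (ee j)) = add_idx (add_idx c c) (twoe j)"
  unfolding add_idx_def ee_def twoe_def by auto

lemma mdeg_add: "mdeg n (add_idx a b) = mdeg n a + mdeg n b"
  unfolding mdeg_def add_idx_def by (simp add: sum.distrib)
lemma mdeg_ee: "j < n \<Longrightarrow> mdeg n (ee j) = 1"
  unfolding mdeg_def ee_def by simp
lemma mdeg_twoe: "j < n \<Longrightarrow> mdeg n (twoe j) = 2"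
  unfolding mdeg_def twoe_def by simp
lemma mdeg_zero[simp]: "mdeg n zero_idx = 0"
  unfolding mdeg_def zero_idx_def by simp

lemma zero_in_mons[simp]: "zero_idx \<in> mons_upto n k"
  unfolding mons_upto_def by (simp add: zero_idx_def mdeg_def)

lemma mons_mono: "k1 \<le> k2 \<Longrightarrow> mons_upto n k1 \<subseteq> mons_upto n k2"
  unfolding mons_upto_def by auto

lemma add_mons: "a \<in> mons_upto n k1 \<Longrightarrow> b \<in> mons_upto n k2 \<Longrightarrow> add_idx a b \<in> mons_upto n (k1 + k2)"
  using mdeg_add[of n a b] unfolding mons_upto_def add_idx_def by auto

lemma finite_mons: "finite (mons_upto n k)"
proof -
  have "mons_upto n k \<subseteq> {a. \<forall>x. (x \<in> {..<n} \<longrightarrow> a x \<in> {..k}) \<and> (x \<notin> {..<n} \<longrightarrow> a x = 0)}"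
  proof
    fix a assume a: "a \<in> mons_upto n k"
    have "a x \<le> k" if "x < n" for x
    proof -
      have "a x \<le> mdeg n a" unfolding mdeg_def using that by (intro member_le_sum) auto
      thus ?thesis using a unfolding mons_upto_def by auto
    qed
    thus "a \<in> {a. \<forall>x. (x \<in> {..<n} \<longrightarrow> a x \<in> {..k}) \<and> (x \<notin> {..<n} \<longrightarrow> a x = 0)}"
      using a unfolding mons_upto_def by auto
  qed
  moreover have "finite {a. \<forall>x. (x \<in> {..<n} \<longrightarrow> a x \<in> {..k}) \<and> (x \<notin> {..<n} \<longrightarrow> a x = 0)}"
    by (rule finite_set_of_finite_funs) auto
  ultimately show ?thesis by (rule finite_subset)
qed

lemma poly_fin: "is_poly n q \<Longrightarrow> finite {c. q c \<noteq> 0}"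
  unfolding is_poly_def by simp

lemma poly_mdeg_le:
  assumes "is_poly n q" "q c \<noteq> 0"
  shows "mdeg n c \<le> pdeg n q"
proof -
  have "{mdeg n a | a. q a \<noteq> 0} = mdeg n ` {a. q a \<noteq> 0}" by auto
  hence fin: "finite (insert 0 {mdeg n a | a. q a \<noteq> 0})" using poly_fin[OF assms(1)] by simp
  show ?thesis unfolding pdeg_def by (rule Max_ge[OF fin]) (use assms(2) in auto)
qed

lemma poly_in_mons: "is_poly n q \<Longrightarrow> q c \<noteq> 0 \<Longrightarrow> c \<in> mons_upto n (pdeg n q)"
  using poly_mdeg_le[of n q c] unfolding mons_upto_def is_poly_def by auto

lemma one_poly_is_poly: "is_poly n one_poly"
  unfolding is_poly_def one_poly_def zero_idx_def by auto

lemma supp_one: "{c. one_poly c \<noteq> 0} = {zero_idx}"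
  unfolding one_poly_def by auto

lemma pdeg_one: "pdeg n one_poly = 0"
proof -
  have "{mdeg n a | a. one_poly a \<noteq> 0} = {0}" unfolding one_poly_def by auto
  thus ?thesis unfolding pdeg_def by simp
qed

lemma Amat_closed:
  assumes "finite {c. q c \<noteq> 0}"
  shows "Amat q al a b = (\<Sum>c\<in>{c. q c \<noteq> 0}. if add_idx (add_idx a b) c = al then q c else 0)"
proof -
  have "{c. q c \<noteq> 0 \<and> add_idx (add_idx a b) c = al} = {c \<in> {c. q c \<noteq> 0}. add_idx (add_idx a b) c = al}"
    by auto
  thus ?thesis unfolding Amat_def using sum.inter_filter[OF assms] by simp
qed

lemma interchange:
  assumes fin: "finite I" and fq: "finite {c. q c \<noteq> 0}"
    and inI: "\<forall>c\<in>{c. q c \<noteq> 0}. add_idx (add_idx a b) c \<in> I"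
  shows "(\<Sum>al\<in>I. y al * Amat q al a b) = locmat q y a b"
proof -
  have "(\<Sum>al\<in>I. y al * Amat q al a b)
      = (\<Sum>al\<in>I. \<Sum>c\<in>{c. q c \<noteq> 0}. if add_idx (add_idx a b) c = al then y al * q c else 0)"
    unfolding Amat_closed[OF fq] sum_distrib_left by (intro sum.cong refl) simp
  also have "\<dots> = (\<Sum>c\<in>{c. q c \<noteq> 0}. \<Sum>al\<in>I. if add_idx (add_idx a b) c = al then y al * q c else 0)"
    by (rule sum.swap)
  also have "\<dots> = (\<Sum>c\<in>{c. q c \<noteq> 0}. q c * y (add_idx (add_idx a b) c))"
    using inI fin by (intro sum.cong refl) (simp add: sum.delta mult.commute)
  finally show ?thesis unfolding locmat_def .
qed

lemma mons_decomp:
  assumes "\<forall>j\<ge>n. c j = 0" "mdeg n c = Suc k"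
  shows "\<exists>i<n. \<exists>c'. c = add_idx c' (ee i) \<and> mdeg n c' = k \<and> (\<forall>j\<ge>n. c' j = 0)"
proof -
  obtain i where i: "i < n" "c i > 0"
  proof (rule ccontr)
    assume "\<not> thesis"
    hence "\<forall>i<n. c i = 0" using that by auto
    hence "mdeg n c = 0" unfolding mdeg_def by simp
    thus False using assms by simp
  qed
  define c' where "c' = c(i := c i - 1)"
  have "c = add_idx c' (ee i)" unfolding c'_def add_idx_def ee_def using i by auto
  moreover have "mdeg n c' = k"
  proof -
    have "mdeg n c = c i + (\<Sum>j\<in>{..<n} - {i}. c j)" unfolding mdeg_def using i
      by (subst sum.remove[of _ i]) auto
    moreover have "mdeg n c' = c' i + (\<Sum>j\<in>{..<n} - {i}. c' j)" unfolding mdeg_def using i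
      by (subst sum.remove[of _ i]) auto
    moreover have "(\<Sum>j\<in>{..<n} - {i}. c' j) = (\<Sum>j\<in>{..<n} - {i}. c j)"
      unfolding c'_def by (intro sum.cong) auto
    ultimately show ?thesis using assms(2) i unfolding c'_def by simp
  qed
  moreover have "\<forall>j\<ge>n. c' j = 0" using assms(1) i unfolding c'_def by auto
  ultimately show ?thesis using i by blast
qed

lemma mons_split:
  "\<forall>al. (\<forall>j\<ge>n. al j = 0) \<and> mdeg n al \<le> k1 + k2 \<longrightarrow>
     (\<exists>a b. al = add_idx a b \<and> a \<in> mons_upto n k1 \<and> b \<in> mons_upto n k2)"
proof (induction k1)
  case 0
  show ?case
  proof (intro allI impI)
    fix al assume "(\<forall>j\<ge>n. al j = 0) \<and> mdeg n al \<le> 0 + k2"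
    hence "al \<in> mons_upto n k2" unfolding mons_upto_def by simp
    moreover have "al = add_idx zero_idx al" by simp
    ultimately show "\<exists>a b. al = add_idx a b \<and> a \<in> mons_upto n 0 \<and> b \<in> mons_upto n k2"
      using zero_in_mons by blast
  qed
next
  case (Suc k)
  show ?case
  proof (intro allI impI)
    fix al assume al: "(\<forall>j\<ge>n. al j = 0) \<and> mdeg n al \<le> Suc k + k2"
    show "\<exists>a b. al = add_idx a b \<and> a \<in> mons_upto n (Suc k) \<and> b \<in> mons_upto n k2"
    proof (cases "mdeg n al \<le> k + k2")
      case True
      obtain a b where "al = add_idx a b" "a \<in> mons_upto n k" "b \<in> mons_upto n k2"
        using Suc.IH al True by blast
      moreover have "mons_upto n k \<subseteq> mons_upto n (Suc k)" by (rule mons_mono) simp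
      ultimately show ?thesis by blast
    next
      case False
      hence "mdeg n al = Suc (k + k2)" using al by simp
      then obtain i c' where i: "i < n" "al = add_idx c' (ee i)" "mdeg n c' = k + k2" "\<forall>j\<ge>n. c' j = 0"
        using mons_decomp[of n al "k + k2"] al by blast
      then obtain a b where ab: "c' = add_idx a b" "a \<in> mons_upto n k" "b \<in> mons_upto n k2"
        using Suc.IH[rule_format, of c'] i(3,4) by auto
      have "ee i \<in> mons_upto n 1" using mdeg_ee[OF i(1)] i(1) unfolding mons_upto_def by (simp add: ee_def[of i])
      from add_mons[OF ab(2) this] have "add_idx a (ee i) \<in> mons_upto n (Suc k)" by simp
      moreover have "al = add_idx (add_idx a (ee i)) b"
        using i(2) ab(1) by (simp add: add_idx_def fun_eq_iff)
      ultimately show ?thesis using ab by blast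
    qed
  qed
qed




lemma twoe_ne_zero: "twoe j \<noteq> zero_idx"
proof
  assume "twoe j = zero_idx"
  hence "twoe j j = zero_idx j" by simp
  thus False by (simp add: twoe_def zero_idx_def)
qed

lemma twoe_inj: "inj twoe"
proof (rule injI)
  fix x y assume "twoe x = twoe y"
  hence "twoe x x = twoe y x" by simp
  thus "x = y" by (simp add: twoe_def split: if_splits)
qed

lemma ball_supp: "ball_poly n R \<gamma> \<noteq> 0 \<Longrightarrow> \<gamma> \<in> insert zero_idx (twoe ` {..<n})"
  unfolding ball_poly_def twoe_def by (auto split: if_splits)

lemma ball_zero: "ball_poly n R zero_idx = R\<^sup>2"
  unfolding ball_poly_def by simp

lemma ball_twoe: "j < n \<Longrightarrow> ball_poly n R (twoe j) = -1"
  unfolding ball_poly_def using twoe_ne_zero[of j] unfolding twoe_def by auto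

lemma ball_fin: "finite {c. ball_poly n R c \<noteq> 0}"
  by (rule finite_subset[of _ "insert zero_idx (twoe ` {..<n})"]) (use ball_supp in auto)

lemma pdeg_ball: "pdeg n (ball_poly n R) \<le> 2"
proof -
  have sub: "{mdeg n a | a. ball_poly n R a \<noteq> 0} \<subseteq> mdeg n ` insert zero_idx (twoe ` {..<n})"
    using ball_supp by blast
  hence fin: "finite (insert 0 {mdeg n a | a. ball_poly n R a \<noteq> 0})"
    using finite_subset by blast
  have "\<forall>x\<in>insert 0 {mdeg n a | a. ball_poly n R a \<noteq> 0}. x \<le> 2"
  proof
    fix x assume "x \<in> insert 0 {mdeg n a | a. ball_poly n R a \<noteq> 0}"
    hence "x = 0 \<or> (\<exists>a. x = mdeg n a \<and> a \<in> insert zero_idx (twoe ` {..<n}))"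
      using ball_supp by blast
    thus "x \<le> 2" using mdeg_twoe by auto
  qed
  thus ?thesis unfolding pdeg_def using fin by (simp add: Max_le_iff)
qed

lemma Amat_ball:
  "Amat (ball_poly n R) al c c = R\<^sup>2 * EE (add_idx c c) al - (\<Sum>j<n. EE (add_idx (add_idx c c) (twoe j)) al)"
proof -
  let ?T = "insert zero_idx (twoe ` {..<n})"
  let ?F = "\<lambda>\<gamma>. if add_idx (add_idx c c) \<gamma> = al then ball_poly n R \<gamma> else 0"
  have "Amat (ball_poly n R) al c c = (\<Sum>\<gamma>\<in>{c. ball_poly n R c \<noteq> 0}. ?F \<gamma>)"
    by (rule Amat_closed[OF ball_fin])
  also have "\<dots> = (\<Sum>\<gamma>\<in>?T. ?F \<gamma>)"
    by (rule sum.mono_neutral_left) (use ball_supp in auto)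
  also have "\<dots> = ?F zero_idx + (\<Sum>\<gamma>\<in>twoe ` {..<n}. ?F \<gamma>)"
  proof -
    have nz: "zero_idx \<notin> twoe ` {..<n}" using twoe_ne_zero by (metis imageE)
    show ?thesis by (subst sum.insert) (use nz in auto)
  qed
  also have "(\<Sum>\<gamma>\<in>twoe ` {..<n}. ?F \<gamma>) = (\<Sum>j<n. ?F (twoe j))"
    using twoe_inj by (subst sum.reindex) (auto intro: inj_on_subset)
  also have "\<dots> = (\<Sum>j<n. - EE (add_idx (add_idx c c) (twoe j)) al)"
    by (intro sum.cong refl) (auto simp: ball_twoe EE_def)
  finally show ?thesis by (simp add: ball_zero EE_def sum_negf)
qed

lemma Amat_one: "Amat one_poly al a b = EE (add_idx a b) al"
proof -
  have "Amat one_poly al a b = (\<Sum>c\<in>{zero_idx}. if add_idx (add_idx a b) c = al then one_poly c else 0)"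
    using Amat_closed[of one_poly al a b] supp_one by simp
  thus ?thesis by (auto simp: EE_def one_poly_def)
qed

lemma qf_delta: "finite J \<Longrightarrow> a \<in> J \<Longrightarrow> qf J M (EE a) = M a a"
proof -
  assume "finite J" "a \<in> J"
  hence "qf J M (EE a) = qf {a} M (EE a)" by (intro qf_restrict) (auto simp: EE_def)
  thus ?thesis by (simp add: qf_def EE_def)
qed

lemma qf_pair: "a \<noteq> b \<Longrightarrow> qf {a, b} M v = v a * M a a * v a + v a * M a b * v b + (v b * M b a * v a + v b * M b b * v b)"
  unfolding qf_def by simp

lemma qf_two: 
  assumes "finite J" "a \<in> J" "b \<in> J"
  shows "qf J M (\<lambda>x. EE a x + s * EE b x) = M a a + s * M a b + s * M b a + s * s * M b b"
proof (cases "a = b")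
  case True
  have "qf J M (\<lambda>x. EE a x + s * EE b x) = qf {a} M (\<lambda>x. EE a x + s * EE b x)"
    using assms True by (intro qf_restrict) (auto simp: EE_def)
  also have "\<dots> = (1 + s) * M a a * (1 + s)" using True by (simp add: qf_def EE_def)
  finally show ?thesis using True by (simp add: algebra_simps)
next
  case False
  define v where "v = (\<lambda>x. EE a x + s * EE b x)"
  have "qf J M v = qf {a, b} M v"
    using assms unfolding v_def by (intro qf_restrict) (auto simp: EE_def)
  also have "\<dots> = v a * M a a * v a + v a * M a b * v b + (v b * M b a * v a + v b * M b b * v b)"
    by (rule qf_pair[OF False])
  also have "v a = 1" using False unfolding v_def by (simp add: EE_def)
  also have "v b = s" using False unfolding v_def by (simp add: EE_def)
  finally show ?thesis unfolding v_def by (simp add: algebra_simps)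
qed




locale lp =
  fixes n m d :: nat and f :: rpoly and g :: "nat \<Rightarrow> rpoly" and R :: real
  assumes fpoly: "is_poly n f"
    and gpoly: "\<forall>i\<in>{1..m}. is_poly n (g i)"
    and m1: "m \<ge> 1"
    and gm: "g m = ball_poly n R"
    and fdeg: "pdeg n f \<le> 2 * d"
    and dd: "d \<ge> dmin n g m"
begin

definition "II = mons_upto n (2 * d)"
definition "JJ i = mons_upto n (d - dloc n g i)"
definition "pp i = gg g i"
definition "Cset = {h. \<exists>Z. (\<forall>i\<le>m. psd (JJ i) (Z i)) \<and>
   (\<forall>al\<in>II. h al = (\<Sum>i\<le>m. tr_inner (JJ i) (Amat (pp i) al) (Z i)))}"

lemma finII: "finite II" unfolding II_def by (rule finite_mons)
lemma finJJ: "finite (JJ i)" unfolding JJ_def by (rule finite_mons)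
lemma zeroII: "zero_idx \<in> II" unfolding II_def by simp

lemma pp_poly: "i \<le> m \<Longrightarrow> is_poly n (pp i)"
  using gpoly one_poly_is_poly unfolding pp_def gg_def by (cases "i = 0") auto

lemma dloc_le: "i \<le> m \<Longrightarrow> dloc n g i \<le> d"
proof -
  assume i: "i \<le> m"
  have "{dloc n g i | i. i \<le> m} = dloc n g ` {..m}" by auto
  hence "finite {dloc n g i | i. i \<le> m}" by simp
  hence "dloc n g i \<le> dmin n g m" unfolding dmin_def using i by (intro Max_ge) auto
  thus ?thesis using dd by simp
qed

lemma idx_in_II:
  assumes i: "i \<le> m" and a: "a \<in> JJ i" and b: "b \<in> JJ i" and c: "pp i c \<noteq> 0"
  shows "add_idx (add_idx a b) c \<in> II"
proof -
  have cm: "c \<in> mons_upto n (pdeg n (pp i))" using poly_in_mons[of n "pp i" c, OF pp_poly[OF i] c] .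
  have "add_idx (add_idx a b) c \<in> mons_upto n ((d - dloc n g i) + (d - dloc n g i) + pdeg n (pp i))"
    by (rule add_mons[OF add_mons cm]) (use a b in \<open>simp_all add: JJ_def\<close>)
  moreover have "(d - dloc n g i) + (d - dloc n g i) + pdeg n (pp i) \<le> 2 * d"
    using dloc_le[OF i] unfolding dloc_def pp_def by simp
  ultimately show ?thesis unfolding II_def using mons_mono[of _ "2 * d" n] by blast
qed

lemma supp_f_II: "f a \<noteq> 0 \<Longrightarrow> a \<in> II"
  using poly_in_mons[OF fpoly] fdeg mons_mono unfolding II_def by blast

lemma Cset_cong: "h \<in> Cset \<Longrightarrow> (\<forall>al\<in>II. h' al = h al) \<Longrightarrow> h' \<in> Cset"
  unfolding Cset_def by auto

lemma psd_add: "psd J A \<Longrightarrow> psd J B \<Longrightarrow> psd J (\<lambda>a b. A a b + B a b)"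
  unfolding psd_def by (simp add: algebra_simps sum.distrib add_nonneg_nonneg)

lemma psd_scale: "psd J A \<Longrightarrow> 0 \<le> r \<Longrightarrow> psd J (\<lambda>a b. r * A a b)"
proof -
  assume A: "psd J A" and r: "0 \<le> r"
  show ?thesis unfolding psd_def
  proof (intro conjI allI ballI)
    fix a b assume "a \<in> J" "b \<in> J" thus "r * A a b = r * A b a" using A unfolding psd_def by auto
  next
    fix v
    have "(\<Sum>a\<in>J. \<Sum>b\<in>J. v a * (r * A a b) * v b) = r * (\<Sum>a\<in>J. \<Sum>b\<in>J. v a * A a b * v b)"
      by (simp add: sum_distrib_left algebra_simps)
    thus "0 \<le> (\<Sum>a\<in>J. \<Sum>b\<in>J. v a * (r * A a b) * v b)" using A r unfolding psd_def by simp
  qed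
qed

lemma psd_zero: "psd J (\<lambda>a b. 0)" unfolding psd_def by simp

lemma psd_rank1: "psd J (\<lambda>a b. v a * v b)"
  unfolding psd_def
proof (intro conjI allI ballI)
  fix w
  have "(\<Sum>a\<in>J. \<Sum>b\<in>J. w a * (v a * v b) * w b) = (\<Sum>a\<in>J. w a * v a) * (\<Sum>b\<in>J. w b * v b)"
    by (simp add: sum_product algebra_simps)
  thus "0 \<le> (\<Sum>a\<in>J. \<Sum>b\<in>J. w a * (v a * v b) * w b)" by simp
qed simp

lemma tr_add: "tr_inner J A (\<lambda>a b. X a b + Y a b) = tr_inner J A X + tr_inner J A Y"
  unfolding tr_inner_def by (simp add: algebra_simps sum.distrib)
lemma tr_scale: "tr_inner J A (\<lambda>a b. r * X a b) = r * tr_inner J A X"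
  unfolding tr_inner_def by (simp add: algebra_simps sum_distrib_left)
lemma tr_zero: "tr_inner J A (\<lambda>a b. 0) = 0"
  unfolding tr_inner_def by simp

lemma Cset_add: "h1 \<in> Cset \<Longrightarrow> h2 \<in> Cset \<Longrightarrow> (\<lambda>a. h1 a + h2 a) \<in> Cset"
proof -
  assume "h1 \<in> Cset" "h2 \<in> Cset"
  then obtain Z1 Z2 where Z1: "\<forall>i\<le>m. psd (JJ i) (Z1 i)" "\<forall>al\<in>II. h1 al = (\<Sum>i\<le>m. tr_inner (JJ i) (Amat (pp i) al) (Z1 i))"
    and Z2: "\<forall>i\<le>m. psd (JJ i) (Z2 i)" "\<forall>al\<in>II. h2 al = (\<Sum>i\<le>m. tr_inner (JJ i) (Amat (pp i) al) (Z2 i))"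
    unfolding Cset_def by blast
  show ?thesis unfolding Cset_def
    by (rule CollectI, rule exI[of _ "\<lambda>i a b. Z1 i a b + Z2 i a b"])
       (use Z1 Z2 in \<open>auto simp: tr_add sum.distrib intro: psd_add\<close>)
qed

lemma Cset_scale: "h \<in> Cset \<Longrightarrow> 0 \<le> r \<Longrightarrow> (\<lambda>a. r * h a) \<in> Cset"
proof -
  assume "h \<in> Cset" and r: "0 \<le> r"
  then obtain Z where Z: "\<forall>i\<le>m. psd (JJ i) (Z i)" "\<forall>al\<in>II. h al = (\<Sum>i\<le>m. tr_inner (JJ i) (Amat (pp i) al) (Z i))"
    unfolding Cset_def by blast
  show ?thesis unfolding Cset_def
    by (rule CollectI, rule exI[of _ "\<lambda>i a b. r * Z i a b"])
       (use Z r in \<open>auto simp: tr_scale sum_distrib_left intro: psd_scale\<close>)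
qed

lemma Cset_zero: "(\<lambda>a. 0) \<in> Cset"
  unfolding Cset_def by (rule CollectI, rule exI[of _ "\<lambda>i a b. 0"]) (auto simp: psd_zero tr_zero)

lemma Cset_sum: "finite S \<Longrightarrow> (\<forall>j\<in>S. h j \<in> Cset) \<Longrightarrow> (\<lambda>al. \<Sum>j\<in>S. h j al) \<in> Cset"
proof (induction S rule: finite_induct)
  case empty thus ?case using Cset_zero by simp
next
  case (insert x S)
  thus ?case using Cset_add[of "h x" "\<lambda>al. \<Sum>j\<in>S. h j al"] by simp
qed

lemma Cset_cert:
  assumes i: "i \<le> m"
  shows "(\<lambda>al. qf (JJ i) (Amat (pp i) al) v) \<in> Cset"
proof -
  define Z where "Z = (\<lambda>j. if j = i then (\<lambda>a b. v a * v b) else (\<lambda>a b. 0::real))"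
  have "\<forall>j\<le>m. psd (JJ j) (Z j)" unfolding Z_def using psd_rank1 psd_zero by auto
  moreover have "\<forall>al\<in>II. qf (JJ i) (Amat (pp i) al) v = (\<Sum>j\<le>m. tr_inner (JJ j) (Amat (pp j) al) (Z j))"
  proof
    fix al
    have "(\<Sum>j\<le>m. tr_inner (JJ j) (Amat (pp j) al) (Z j)) = tr_inner (JJ i) (Amat (pp i) al) (\<lambda>a b. v a * v b)"
      unfolding Z_def using i by (simp add: tr_zero if_distrib cong: if_cong)
    also have "\<dots> = qf (JJ i) (Amat (pp i) al) v"
      unfolding tr_inner_def qf_def by (intro sum.cong refl) (simp add: algebra_simps)
    finally show "qf (JJ i) (Amat (pp i) al) v = (\<Sum>j\<le>m. tr_inner (JJ j) (Amat (pp j) al) (Z j))" by simp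
  qed
  ultimately show ?thesis unfolding Cset_def by blast
qed

lemma JJ0: "JJ 0 = mons_upto n d"
  unfolding JJ_def dloc_def gg_def by (simp add: pdeg_one)
lemma pp0: "pp 0 = one_poly" unfolding pp_def gg_def by simp
lemma ppm: "pp m = ball_poly n R" unfolding pp_def gg_def using m1 gm by simp
lemma JJm: "mons_upto n (d - 1) \<subseteq> JJ m"
proof -
  have "dloc n g m \<le> 1" unfolding dloc_def gg_def using m1 gm pdeg_ball[of n R] by simp
  thus ?thesis unfolding JJ_def by (intro mons_mono) simp
qed

lemma cert_sq: "a \<in> mons_upto n d \<Longrightarrow> EE (add_idx a a) \<in> Cset"
proof -
  assume a: "a \<in> mons_upto n d"
  have "(\<lambda>al. qf (JJ 0) (Amat (pp 0) al) (EE a)) \<in> Cset" by (rule Cset_cert) simp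
  moreover have "qf (JJ 0) (Amat (pp 0) al) (EE a) = EE (add_idx a a) al" for al
    using a by (simp add: JJ0 pp0 qf_delta[OF finite_mons] Amat_one)
  ultimately show ?thesis by simp
qed

lemma cert_mix:
  assumes a: "a \<in> mons_upto n d" and b: "b \<in> mons_upto n d" and s: "s * s = 1"
  shows "(\<lambda>al. EE (add_idx a a) al + EE (add_idx b b) al + 2 * s * EE (add_idx a b) al) \<in> Cset"
proof -
  have "(\<lambda>al. qf (JJ 0) (Amat (pp 0) al) (\<lambda>x. EE a x + s * EE b x)) \<in> Cset" by (rule Cset_cert) simp
  moreover have "qf (JJ 0) (Amat (pp 0) al) (\<lambda>x. EE a x + s * EE b x)
      = EE (add_idx a a) al + EE (add_idx b b) al + 2 * s * EE (add_idx a b) al" for al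
    using a b s by (simp add: JJ0 pp0 qf_two[OF finite_mons] Amat_one add_idx_comm[of b a] algebra_simps)
  ultimately show ?thesis by simp
qed

lemma cert_ball:
  assumes c: "c \<in> mons_upto n (d - 1)"
  shows "(\<lambda>al. R\<^sup>2 * EE (add_idx c c) al - (\<Sum>j<n. EE (add_idx (add_idx c c) (twoe j)) al)) \<in> Cset"
proof -
  have "(\<lambda>al. qf (JJ m) (Amat (pp m) al) (EE c)) \<in> Cset" by (rule Cset_cert) simp
  moreover have "c \<in> JJ m" using c JJm by blast
  ultimately show ?thesis by (simp add: ppm qf_delta[OF finJJ] Amat_ball)
qed

lemma cert_R1:
  assumes c: "c \<in> mons_upto n d" and cd: "mdeg n c + 1 \<le> d" and i: "i < n"
  shows "(\<lambda>al. R\<^sup>2 * EE (add_idx c c) al - EE (add_idx (add_idx c c) (twoe i)) al) \<in> Cset"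
proof -
  have c1: "c \<in> mons_upto n (d - 1)" using c cd unfolding mons_upto_def by auto
  have cj: "add_idx c (ee j) \<in> mons_upto n d" if "j < n" for j
  proof -
    have "ee j \<in> mons_upto n 1" using mdeg_ee[OF that] that unfolding mons_upto_def by (simp add: ee_def[of j])
    hence "add_idx c (ee j) \<in> mons_upto n (mdeg n c + 1)"
      using c by (intro add_mons) (auto simp: mons_upto_def)
    thus ?thesis using mons_mono[OF cd] by blast
  qed
  have "(\<lambda>al. \<Sum>j\<in>{..<n} - {i}. EE (add_idx (add_idx c c) (twoe j)) al) \<in> Cset"
    using cj cert_sq[of "add_idx c (ee _)"] by (intro Cset_sum) (auto simp: add_twoe)
  from Cset_add[OF cert_ball[OF c1] this]
  have "(\<lambda>al. R\<^sup>2 * EE (add_idx c c) al - (\<Sum>j<n. EE (add_idx (add_idx c c) (twoe j)) al)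
      + (\<Sum>j\<in>{..<n} - {i}. EE (add_idx (add_idx c c) (twoe j)) al)) \<in> Cset" .
  moreover have "(\<Sum>j<n. EE (add_idx (add_idx c c) (twoe j)) al)
      = EE (add_idx (add_idx c c) (twoe i)) al + (\<Sum>j\<in>{..<n} - {i}. EE (add_idx (add_idx c c) (twoe j)) al)" for al
    using i by (intro sum.remove) auto
  ultimately show ?thesis by simp
qed

lemma cert_R2:
  "\<forall>c. c \<in> mons_upto n d \<and> mdeg n c = k \<longrightarrow>
     (\<lambda>al. (R\<^sup>2) ^ k * EE zero_idx al - EE (add_idx c c) al) \<in> Cset"
proof (induction k)
  case 0
  show ?case
  proof (intro allI impI)
    fix c assume c: "c \<in> mons_upto n d \<and> mdeg n c = 0"
    have "c = zero_idx"
    proof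
      fix j show "c j = zero_idx j"
      proof (cases "j < n")
        case True
        have "c j \<le> mdeg n c" unfolding mdeg_def using True by (intro member_le_sum) auto
        thus ?thesis using c by (simp add: zero_idx_def)
      next
        case False thus ?thesis using c by (simp add: mons_upto_def zero_idx_def)
      qed
    qed
    thus "(\<lambda>al. (R\<^sup>2) ^ 0 * EE zero_idx al - EE (add_idx c c) al) \<in> Cset"
      using Cset_zero by simp
  qed
next
  case (Suc k)
  show ?case
  proof (intro allI impI)
    fix c assume c: "c \<in> mons_upto n d \<and> mdeg n c = Suc k"
    then obtain i c' where i: "i < n" "c = add_idx c' (ee i)" "mdeg n c' = k" "\<forall>j\<ge>n. c' j = 0"
      using mons_decomp[of n c k] c unfolding mons_upto_def by blast
    have c'm: "c' \<in> mons_upto n d" using i c unfolding mons_upto_def by auto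
    have h1: "(\<lambda>al. (R\<^sup>2) ^ k * EE zero_idx al - EE (add_idx c' c') al) \<in> Cset"
      using Suc.IH c'm i by blast
    have h2: "(\<lambda>al. R\<^sup>2 * EE (add_idx c' c') al - EE (add_idx (add_idx c' c') (twoe i)) al) \<in> Cset"
    proof -
      have "mdeg n c' + 1 \<le> d" using c i(3) unfolding mons_upto_def by simp
      from cert_R1[OF c'm this i(1)] show ?thesis .
    qed
    have "(\<lambda>al. R\<^sup>2 * ((R\<^sup>2) ^ k * EE zero_idx al - EE (add_idx c' c') al)
       + (R\<^sup>2 * EE (add_idx c' c') al - EE (add_idx (add_idx c' c') (twoe i)) al)) \<in> Cset"
      using Cset_add[OF Cset_scale[OF h1] h2] by simp
    moreover have "add_idx c c = add_idx (add_idx c' c') (twoe i)" using i add_twoe by simp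
    ultimately show "(\<lambda>al. (R\<^sup>2) ^ Suc k * EE zero_idx al - EE (add_idx c c) al) \<in> Cset"
      by (simp add: algebra_simps)
  qed
qed

lemma core:
  assumes al: "al \<in> II" and s: "s * s = 1"
  shows "\<exists>t. (\<lambda>x. t * EE zero_idx x + s * EE al x) \<in> Cset"
proof -
  have "\<exists>a b. al = add_idx a b \<and> a \<in> mons_upto n d \<and> b \<in> mons_upto n d"
    using mons_split[of n d d] al unfolding II_def mons_upto_def by (simp add: mult_2)
  then obtain a b where ab: "al = add_idx a b" "a \<in> mons_upto n d" "b \<in> mons_upto n d"
    by blast
  have ha: "(\<lambda>x. (R\<^sup>2) ^ mdeg n a * EE zero_idx x - EE (add_idx a a) x) \<in> Cset"
    using cert_R2 ab by blast
  have hb: "(\<lambda>x. (R\<^sup>2) ^ mdeg n b * EE zero_idx x - EE (add_idx b b) x) \<in> Cset"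
    using cert_R2 ab by blast
  have hm: "(\<lambda>x. EE (add_idx a a) x + EE (add_idx b b) x + 2 * s * EE (add_idx a b) x) \<in> Cset"
    by (rule cert_mix[OF ab(2,3) s])
  define t where "t = ((R\<^sup>2) ^ mdeg n a + (R\<^sup>2) ^ mdeg n b) / 2"
  have "(\<lambda>x. (1/2) * (EE (add_idx a a) x + EE (add_idx b b) x + 2 * s * EE (add_idx a b) x)
      + ((1/2) * ((R\<^sup>2) ^ mdeg n a * EE zero_idx x - EE (add_idx a a) x)
      + (1/2) * ((R\<^sup>2) ^ mdeg n b * EE zero_idx x - EE (add_idx b b) x))) \<in> Cset"
    by (intro Cset_add Cset_scale ha hb hm) simp_all
  moreover have "(1/2) * (EE (add_idx a a) x + EE (add_idx b b) x + 2 * s * EE (add_idx a b) x)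
      + ((1/2) * ((R\<^sup>2) ^ mdeg n a * EE zero_idx x - EE (add_idx a a) x)
      + (1/2) * ((R\<^sup>2) ^ mdeg n b * EE zero_idx x - EE (add_idx b b) x))
      = t * EE zero_idx x + s * EE al x" for x
    unfolding t_def ab(1) by (simp add: algebra_simps)
  ultimately show ?thesis by auto
qed

end


context lp begin

lemma Dfeas_iff: "(\<exists>Z. D_feas n f g m d z Z) \<longleftrightarrow> (\<lambda>al. f al - (if al = zero_idx then z else 0)) \<in> Cset"
  unfolding D_feas_def Cset_def II_def JJ_def pp_def by simp

lemma obj_II: "(\<Sum>a\<in>{a. f a \<noteq> 0}. f a * y a) = (\<Sum>a\<in>II. f a * y a)"
  by (rule sum.mono_neutral_left[OF finII]) (use supp_f_II in auto)

lemma tr_interchange: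
  assumes i: "i \<le> m"
  shows "(\<Sum>al\<in>II. y al * tr_inner (JJ i) (Amat (pp i) al) W) = tr_inner (JJ i) (locmat (pp i) y) W"
proof -
  have "(\<Sum>al\<in>II. y al * tr_inner (JJ i) (Amat (pp i) al) W)
      = (\<Sum>al\<in>II. \<Sum>a\<in>JJ i. \<Sum>b\<in>JJ i. y al * Amat (pp i) al a b * W b a)"
    unfolding tr_inner_def by (simp add: sum_distrib_left mult.assoc)
  also have "\<dots> = (\<Sum>a\<in>JJ i. \<Sum>b\<in>JJ i. \<Sum>al\<in>II. y al * Amat (pp i) al a b * W b a)"
    by (subst sum.swap) (rule sum.cong[OF refl], rule sum.swap)
  also have "\<dots> = (\<Sum>a\<in>JJ i. \<Sum>b\<in>JJ i. (\<Sum>al\<in>II. y al * Amat (pp i) al a b) * W b a)"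
    by (simp add: sum_distrib_right)
  also have "\<dots> = (\<Sum>a\<in>JJ i. \<Sum>b\<in>JJ i. locmat (pp i) y a b * W b a)"
    using idx_in_II[OF i] poly_fin[OF pp_poly[OF i]]
    by (intro sum.cong refl) (subst interchange[OF finII], auto)
  finally show ?thesis unfolding tr_inner_def .
qed

lemma qf_interchange:
  assumes i: "i \<le> m"
  shows "(\<Sum>al\<in>II. y al * qf (JJ i) (Amat (pp i) al) v) = qf (JJ i) (locmat (pp i) y) v"
proof -
  have "(\<Sum>al\<in>II. y al * qf (JJ i) (Amat (pp i) al) v)
      = (\<Sum>al\<in>II. \<Sum>a\<in>JJ i. \<Sum>b\<in>JJ i. v a * (y al * Amat (pp i) al a b) * v b)"
    unfolding qf_def by (simp add: sum_distrib_left algebra_simps)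
  also have "\<dots> = (\<Sum>a\<in>JJ i. \<Sum>b\<in>JJ i. \<Sum>al\<in>II. v a * (y al * Amat (pp i) al a b) * v b)"
    by (subst sum.swap) (rule sum.cong[OF refl], rule sum.swap)
  also have "\<dots> = (\<Sum>a\<in>JJ i. \<Sum>b\<in>JJ i. v a * (\<Sum>al\<in>II. y al * Amat (pp i) al a b) * v b)"
    by (simp add: sum_distrib_right sum_distrib_left)
  also have "\<dots> = (\<Sum>a\<in>JJ i. \<Sum>b\<in>JJ i. v a * locmat (pp i) y a b * v b)"
    using idx_in_II[OF i] poly_fin[OF pp_poly[OF i]]
    by (intro sum.cong refl) (subst interchange[OF finII], auto)
  finally show ?thesis unfolding qf_def .
qed

lemma locmat_sym: "locmat q y a b = locmat q y b a"
  unfolding locmat_def by (simp add: add_idx_comm)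

lemma weak:
  assumes P: "P_feas n g m d y" and D: "D_feas n f g m d z Z"
  shows "z \<le> (\<Sum>a\<in>{a. f a \<noteq> 0}. f a * y a)"
proof -
  have y0: "y zero_idx = 1" and Pm: "\<forall>i\<le>m. psd (JJ i) (locmat (pp i) y)"
    using P unfolding P_feas_def JJ_def pp_def by auto
  have Zp: "\<forall>i\<le>m. psd (JJ i) (Z i)"
    and eq: "\<forall>al\<in>II. f al = (if al = zero_idx then z else 0) + (\<Sum>i\<le>m. tr_inner (JJ i) (Amat (pp i) al) (Z i))"
    using D unfolding D_feas_def JJ_def pp_def II_def by (auto simp: algebra_simps)
  let ?T = "\<lambda>i a. tr_inner (JJ i) (Amat (pp i) a) (Z i)"
  have "(\<Sum>a\<in>II. f a * y a) = (\<Sum>a\<in>II. (if a = zero_idx then z else 0) * y a + (\<Sum>i\<le>m. ?T i a * y a))"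
    using eq by (intro sum.cong refl) (simp add: distrib_right sum_distrib_right)
  also have "\<dots> = (\<Sum>a\<in>II. (if a = zero_idx then z else 0) * y a) + (\<Sum>a\<in>II. \<Sum>i\<le>m. ?T i a * y a)"
    by (rule sum.distrib)
  also have "(\<Sum>a\<in>II. (if a = zero_idx then z else 0) * y a) = (\<Sum>a\<in>II. if a = zero_idx then z * y a else 0)"
    by (intro sum.cong) auto
  also have "\<dots> = z" using y0 zeroII finII by (simp add: sum.delta)
  also have "(\<Sum>a\<in>II. \<Sum>i\<le>m. ?T i a * y a) = (\<Sum>i\<le>m. \<Sum>a\<in>II. ?T i a * y a)"
    by (rule sum.swap)
  also have "\<dots> = (\<Sum>i\<le>m. tr_inner (JJ i) (locmat (pp i) y) (Z i))"
    by (intro sum.cong refl) (simp add: tr_interchange[symmetric] mult.commute)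
  finally have eqn: "(\<Sum>a\<in>II. f a * y a) = z + (\<Sum>i\<le>m. tr_inner (JJ i) (locmat (pp i) y) (Z i))" .
  have "(\<Sum>i\<le>m. tr_inner (JJ i) (locmat (pp i) y) (Z i)) \<ge> 0"
    using Pm Zp finJJ trace_psd_nonneg by (intro sum_nonneg) blast
  thus ?thesis using eqn obj_II[of y] by simp
qed

lemma sep_feas:
  assumes y0: "y zero_idx = 1" and pos: "\<forall>h\<in>Cset. 0 \<le> (\<Sum>a\<in>II. y a * h a)"
  shows "P_feas n g m d y"
proof -
  have "psd (JJ i) (locmat (pp i) y)" if i: "i \<le> m" for i
    unfolding psd_def
  proof (intro conjI ballI allI)
    fix a b show "locmat (pp i) y a b = locmat (pp i) y b a" by (rule locmat_sym)
  next
    fix v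
    have "0 \<le> (\<Sum>al\<in>II. y al * qf (JJ i) (Amat (pp i) al) v)" using bspec[OF pos Cset_cert[OF i, of v]] by simp
    thus "0 \<le> (\<Sum>a\<in>JJ i. \<Sum>b\<in>JJ i. v a * locmat (pp i) y a b * v b)"
      using qf_interchange[OF i] unfolding qf_def by simp
  qed
  thus ?thesis unfolding P_feas_def JJ_def pp_def using y0 by simp
qed

lemma fsum: "\<exists>T. (\<lambda>al. f al + T * EE zero_idx al) \<in> Cset"
proof -
  have "\<forall>a\<in>II. \<exists>t. (\<lambda>x. t * EE zero_idx x + 1 * EE a x) \<in> Cset"
  proof
    fix a assume "a \<in> II" from core[OF this, of 1] show "\<exists>t. (\<lambda>x. t * EE zero_idx x + 1 * EE a x) \<in> Cset" by simp
  qed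
  then obtain tp where tp: "\<forall>a\<in>II. (\<lambda>x. tp a * EE zero_idx x + 1 * EE a x) \<in> Cset" by metis
  have "\<forall>a\<in>II. \<exists>t. (\<lambda>x. t * EE zero_idx x + (-1) * EE a x) \<in> Cset"
  proof
    fix a assume "a \<in> II" from core[OF this, of "-1"] show "\<exists>t. (\<lambda>x. t * EE zero_idx x + (-1) * EE a x) \<in> Cset" by simp
  qed
  then obtain tm where tm: "\<forall>a\<in>II. (\<lambda>x. tm a * EE zero_idx x + (-1) * EE a x) \<in> Cset" by metis
  define w where "w a = (if f a \<ge> 0 then f a * tp a else - f a * tm a)" for a
  define S where "S = {a. f a \<noteq> 0}"
  have finS: "finite S" using poly_fin[OF fpoly] S_def by simp
  have mem: "(\<lambda>x. f a * EE a x + w a * EE zero_idx x) \<in> Cset" if a: "a \<in> S" for a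
  proof (cases "f a \<ge> 0")
    case True
    have "(\<lambda>x. f a * (tp a * EE zero_idx x + 1 * EE a x)) \<in> Cset"
      using Cset_scale tp a True supp_f_II S_def by blast
    thus ?thesis using True unfolding w_def by (simp add: algebra_simps)
  next
    case False
    have aII: "a \<in> II" using a supp_f_II S_def by blast
    have "(\<lambda>x. (- f a) * (tm a * EE zero_idx x + (-1) * EE a x)) \<in> Cset"
      by (rule Cset_scale) (use tm aII False in auto)
    thus ?thesis using False unfolding w_def by (simp add: algebra_simps)
  qed
  have "(\<lambda>x. \<Sum>a\<in>S. f a * EE a x + w a * EE zero_idx x) \<in> Cset"
    using mem finS by (intro Cset_sum) auto
  moreover have "(\<Sum>a\<in>S. f a * EE a x + w a * EE zero_idx x) = f x + (\<Sum>a\<in>S. w a) * EE zero_idx x" for x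
  proof -
    have "(\<Sum>a\<in>S. f a * EE a x) = (\<Sum>a\<in>S. if a = x then f a else 0)"
      by (intro sum.cong) (auto simp: EE_def)
    also have "\<dots> = f x" using finS unfolding S_def by (simp add: sum.delta)
    finally have "(\<Sum>a\<in>S. f a * EE a x) = f x" .
    thus ?thesis by (simp add: sum.distrib sum_distrib_right)
  qed
  ultimately show ?thesis by auto
qed

lemma strong:
  assumes nD: "\<not> (\<exists>Z. D_feas n f g m d c Z)"
  shows "\<exists>y. P_feas n g m d y \<and> (\<Sum>a\<in>{a. f a \<noteq> 0}. f a * y a) \<le> c"
proof -
  define pv where "pv al = f al - (if al = zero_idx then c else 0)" for al
  have pvC: "pv \<notin> Cset" using nD Dfeas_iff unfolding pv_def by simp
  define C' where "C' = {h. \<exists>u\<in>Cset. \<exists>l\<ge>0. \<forall>a\<in>II. h a = u a - l * pv a}"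
  have CC': "Cset \<subseteq> C'" unfolding C'_def by force
  have E0: "EE zero_idx \<in> Cset" using cert_sq[of zero_idx] by simp
  obtain y where y0: "y zero_idx = 1" and ypos: "\<forall>h\<in>C'. 0 \<le> (\<Sum>a\<in>II. y a * h a)"
  proof (rule exE[OF hb_sep[OF finII zeroII, of C']])
    fix h1 h2 assume "h1 \<in> C'" "h2 \<in> C'"
    then obtain u1 l1 u2 l2 where "u1 \<in> Cset" "l1 \<ge> 0" "\<forall>a\<in>II. h1 a = u1 a - l1 * pv a"
      "u2 \<in> Cset" "l2 \<ge> 0" "\<forall>a\<in>II. h2 a = u2 a - l2 * pv a" unfolding C'_def by blast
    thus "(\<lambda>a. h1 a + h2 a) \<in> C'" unfolding C'_def
      by (intro CollectI bexI[of _ "\<lambda>a. u1 a + u2 a"] exI[of _ "l1 + l2"]) (auto simp: Cset_add algebra_simps)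
  next
    fix h r assume "h \<in> C'" "(0::real) \<le> r"
    then obtain u l where ul: "u \<in> Cset" "l \<ge> 0" "\<forall>a\<in>II. h a = u a - l * pv a" "0 \<le> r" unfolding C'_def by blast
    have "\<forall>a\<in>II. r * h a = r * u a - (r * l) * pv a"
    proof
      fix a assume "a \<in> II"
      hence "h a = u a - l * pv a" using ul(3) by blast
      thus "r * h a = r * u a - (r * l) * pv a" by (simp add: right_diff_distrib mult.assoc)
    qed
    thus "(\<lambda>a. r * h a) \<in> C'" unfolding C'_def using ul
      by (intro CollectI bexI[of _ "\<lambda>a. r * u a"] exI[of _ "r * l"]) (auto simp: Cset_scale)
  next
    fix b assume "b \<in> II"
    hence "\<exists>t. (\<lambda>x. t * EE zero_idx x + 1 * EE b x) \<in> Cset" by (intro core) auto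
    then obtain t where t: "(\<lambda>x. t * EE zero_idx x + 1 * EE b x) \<in> Cset" by blast
    show "\<exists>t. \<exists>h\<in>C'. \<forall>a\<in>II. h a = t * (if a = zero_idx then 1 else 0) + (if a = b then 1 else 0)"
      by (intro exI[of _ t] bexI[of _ "\<lambda>x. t * EE zero_idx x + 1 * EE b x"]) (use t CC' in \<open>auto simp: EE_def\<close>)
  next
    fix b assume "b \<in> II"
    hence "\<exists>t. (\<lambda>x. t * EE zero_idx x + (-1) * EE b x) \<in> Cset" by (intro core) auto
    then obtain t where t: "(\<lambda>x. t * EE zero_idx x + (-1) * EE b x) \<in> Cset" by blast
    show "\<exists>t. \<exists>h\<in>C'. \<forall>a\<in>II. h a = t * (if a = zero_idx then 1 else 0) - (if a = b then 1 else 0)"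
      by (intro exI[of _ t] bexI[of _ "\<lambda>x. t * EE zero_idx x + (-1) * EE b x"]) (use t CC' in \<open>auto simp: EE_def\<close>)
  next
    fix h assume "h \<in> C'"
    then obtain u l where u: "u \<in> Cset" "l \<ge> 0" "\<forall>a\<in>II. h a = u a - l * pv a" unfolding C'_def by blast
    show "\<not> (\<forall>a\<in>II. h a = - (if a = zero_idx then 1 else 0))"
    proof
      assume hE: "\<forall>a\<in>II. h a = - (if a = zero_idx then 1 else 0)"
      show False
      proof (cases "l = 0")
        case False
        hence lp: "l > 0" using u by simp
        have "(\<lambda>a. (1 / l) * (u a + EE zero_idx a)) \<in> Cset"
          using Cset_scale[OF Cset_add[OF u(1) E0], of "1/l"] lp by simp
        moreover have "\<forall>a\<in>II. pv a = (1 / l) * (u a + EE zero_idx a)"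
          using hE u(3) lp unfolding EE_def by (auto simp: field_simps)
        ultimately have "pv \<in> Cset" by (rule Cset_cong)
        thus False using pvC by simp
      next
        case True
        have mE: "(\<lambda>a. - EE zero_idx a) \<in> Cset"
          using Cset_cong[OF u(1)] hE u(3) True unfolding EE_def by auto
        obtain T where T: "(\<lambda>al. f al + T * EE zero_idx al) \<in> Cset" using fsum by blast
        have "pv \<in> Cset"
        proof (cases "T + c \<ge> 0")
          case True
          have "(\<lambda>a. (f a + T * EE zero_idx a) + (T + c) * (- EE zero_idx a)) \<in> Cset"
            by (intro Cset_add T Cset_scale[OF mE] True)
          thus ?thesis by (rule Cset_cong) (auto simp: pv_def EE_def algebra_simps)
        next
          case False
          have "(\<lambda>a. (f a + T * EE zero_idx a) + (- (T + c)) * EE zero_idx a) \<in> Cset"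
            using False by (intro Cset_add T Cset_scale[OF E0]) simp
          thus ?thesis by (rule Cset_cong) (auto simp: pv_def EE_def algebra_simps)
        qed
        thus False using pvC by simp
      qed
    qed
  qed blast
  have feas: "P_feas n g m d y" by (rule sep_feas[of y, OF y0]) (use ypos CC' in blast)
  have "(\<lambda>a. - pv a) \<in> C'" unfolding C'_def
    by (intro CollectI bexI[of _ "\<lambda>a. 0"] exI[of _ 1]) (auto simp: Cset_zero)
  from bspec[OF ypos this] have "0 \<le> (\<Sum>a\<in>II. y a * (- pv a))" by simp
  also have "(\<Sum>a\<in>II. y a * (- pv a)) = c - (\<Sum>a\<in>II. f a * y a)"
  proof -
    have "(\<Sum>a\<in>II. y a * (- pv a)) = (\<Sum>a\<in>II. y a * (if a = zero_idx then c else 0)) - (\<Sum>a\<in>II. f a * y a)"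
      unfolding pv_def by (simp add: algebra_simps sum_subtractf)
    also have "(\<Sum>a\<in>II. y a * (if a = zero_idx then c else 0)) = c"
      using y0 zeroII finII by (simp add: if_distrib sum.delta cong: if_cong)
    finally show ?thesis .
  qed
  finally show ?thesis using feas obj_II by auto
qed

end


theorem theorem1:
  fixes n m d :: nat and f :: rpoly and g :: "nat \<Rightarrow> rpoly" and R :: real
  assumes "is_poly n f"
    and "\<forall>i\<in>{1..m}. is_poly n (g i)"
    and "m \<ge> 1"
    and "g m = ball_poly n R"
    and "pdeg n f \<le> 2 * d"
    and "d \<ge> dmin n g m"
  shows "valP n f g m d > -\<infinity> \<and> valP n f g m d = valD n f g m d"
proof -
  interpret lp n m d f g R using assms by unfold_locales
  define SP where "SP = {ereal (\<Sum>a\<in>{a. f a \<noteq> 0}. f a * y a) | y. P_feas n g m d y}"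
  define SD where "SD = {ereal z | z. \<exists>Z. D_feas n f g m d z Z}"
  have vP: "valP n f g m d = Inf SP" unfolding valP_def SP_def ..
  have vD: "valD n f g m d = Sup SD" unfolding valD_def SD_def ..
  have le: "Sup SD \<le> Inf SP"
  proof (rule Sup_least)
    fix x assume "x \<in> SD"
    then obtain z Z where x: "x = ereal z" and D: "D_feas n f g m d z Z" unfolding SD_def by blast
    show "x \<le> Inf SP"
    proof (rule Inf_greatest)
      fix w assume "w \<in> SP"
      then obtain y where w: "w = ereal (\<Sum>a\<in>{a. f a \<noteq> 0}. f a * y a)" and P: "P_feas n g m d y"
        unfolding SP_def by blast
      show "x \<le> w" using weak[OF P D] x w by simp
    qed
  qed
  obtain T where T: "(\<lambda>al. f al + T * EE zero_idx al) \<in> Cset" using fsum by blast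
  have "(\<lambda>al. f al - (if al = zero_idx then - T else 0)) \<in> Cset"
    by (rule Cset_cong[OF T]) (auto simp: EE_def)
  hence "\<exists>Z. D_feas n f g m d (- T) Z" using Dfeas_iff by blast
  hence lowT: "ereal (- T) \<le> Sup SD" unfolding SD_def by (intro Sup_upper) blast
  have ge: "Inf SP \<le> Sup SD"
  proof (rule ccontr)
    assume "\<not> Inf SP \<le> Sup SD"
    hence "Sup SD < Inf SP" by simp
    then obtain c where c: "Sup SD < ereal c" "ereal c < Inf SP" using ereal_dense2 by blast
    show False
    proof (cases "\<exists>Z. D_feas n f g m d c Z")
      case True
      hence "ereal c \<le> Sup SD" unfolding SD_def by (intro Sup_upper) blast
      thus False using c by simp
    next
      case False
      then obtain y where P: "P_feas n g m d y" and obj: "(\<Sum>a\<in>{a. f a \<noteq> 0}. f a * y a) \<le> c"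
        using strong by blast
      have "Inf SP \<le> ereal (\<Sum>a\<in>{a. f a \<noteq> 0}. f a * y a)" unfolding SP_def
        by (rule Inf_lower) (use P in blast)
      also have "\<dots> \<le> ereal c" using obj by simp
      finally show False using c by simp
    qed
  qed
  have eq: "valP n f g m d = valD n f g m d" using le ge vP vD by simp
  have "-\<infinity> < ereal (- T)" by simp
  also have "\<dots> \<le> valP n f g m d" using lowT le vP by simp
  finally show ?thesis using eq by simp
qed

end
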